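(* Let $\mathcal{REP}$ be the category of finite-dimensional modules over $\Bbbk[x_1,x_2]$. Then $\mathrm{fpdim}(\mathcal{REP})=2$.
   Context: $\Bbbk$ is algebraically closed. For a $\Bbbk$-linear abelian category $\mathcal C$: a brick is an object $M$ with $\mathrm{Hom}_{\mathcal C}(M,M)=\Bbbk$; a brick set is a finite set $\phi=\{X_1,\dots,X_n\}$ of bricks with $\dim\mathrm{Hom}_{\mathcal C}(X_i,X_j)=\delta_{ij}$; its adjacency matrix is $C(\phi)=(\dim\mathrm{Ext}^1_{\mathcal C}(X_i,X_j))_{i,j}$; $\mathrm{fpdim}(\mathcal C)=\sup\{\rho(C(\phi)):\phi\text{ a brick set}\}$, $\rho$ the spectral radius. *)

theory Defs
  imports "Jordan_Normal_Form.Spectral_Radius" "Jordan_Normal_Form.VS_Connect"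
    "HOL-Computational_Algebra.Polynomial" "HOL-Library.Extended_Real"
begin

text \<open>A finite-dimensional module over k[x1,x2] is (up to isomorphism) a triple
  (n, A, B): a k-vector space k^n with two commuting n x n matrices A, B giving the
  actions of x1 and x2. Every object of REP is isomorphic to one of these, and all
  notions below are isomorphism invariant.\<close>

type_synonym 'k rep = "nat \<times> 'k mat \<times> 'k mat"

definition rep_dim :: "'k rep \<Rightarrow> nat" where "rep_dim M = fst M"
definition act1 :: "'k rep \<Rightarrow> 'k mat" where "act1 M = fst (snd M)"
definition act2 :: "'k rep \<Rightarrow> 'k mat" where "act2 M = snd (snd M)"

definition is_rep :: "'k::field rep \<Rightarrow> bool" where
  "is_rep M \<longleftrightarrow> act1 M \<in> carrier_mat (rep_dim M) (rep_dim M)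
     \<and> act2 M \<in> carrier_mat (rep_dim M) (rep_dim M)
     \<and> act1 M * act2 M = act2 M * act1 M"

definition mdim :: "'k::field itself \<Rightarrow> nat \<Rightarrow> nat \<Rightarrow> 'k mat set \<Rightarrow> nat" where
  "mdim ty r c S = vectorspace.dim class_ring ((module_mat ty r c)\<lparr>carrier := S\<rparr>)"

definition Hom_rep :: "'k::field rep \<Rightarrow> 'k rep \<Rightarrow> 'k mat set" where
  "Hom_rep M N = {F \<in> carrier_mat (rep_dim N) (rep_dim M).
      act1 N * F = F * act1 M \<and> act2 N * F = F * act2 M}"

definition dim_Hom :: "'k::field rep \<Rightarrow> 'k rep \<Rightarrow> nat" where
  "dim_Hom M N = mdim TYPE('k) (rep_dim N) (rep_dim M) (Hom_rep M N)"

text \<open>A pair (G,H) of (dim N x dim M)-matrices, encoded as the block row [G H].\<close>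
definition hpair :: "'k::field mat \<Rightarrow> 'k mat \<Rightarrow> 'k mat" where
  "hpair G H = four_block_mat G H (0\<^sub>m 0 (dim_col G)) (0\<^sub>m 0 (dim_col H))"

text \<open>Ext^1(M,N) = classes of extensions 0 -> N -> E -> M -> 0. Such E may be taken on
  k^(dim N) (+) k^(dim M) with x1, x2 acting by [[A_N, G],[0, A_M]] and [[B_N, H],[0, B_M]];
  these commute iff (G,H) is a cocycle. Two such extensions are equivalent iff the
  cocycles differ by a coboundary (A_N F - F A_M, B_N F - F B_M).\<close>
definition Ext1_cocycles :: "'k::field rep \<Rightarrow> 'k rep \<Rightarrow> 'k mat set" where
  "Ext1_cocycles M N = {hpair G H | G H.
      G \<in> carrier_mat (rep_dim N) (rep_dim M) \<and> H \<in> carrier_mat (rep_dim N) (rep_dim M) \<and>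
      act1 N * H + G * act2 M = act2 N * G + H * act1 M}"

definition Ext1_coboundaries :: "'k::field rep \<Rightarrow> 'k rep \<Rightarrow> 'k mat set" where
  "Ext1_coboundaries M N = {hpair (act1 N * F - F * act1 M) (act2 N * F - F * act2 M) | F.
      F \<in> carrier_mat (rep_dim N) (rep_dim M)}"

definition dim_Ext1 :: "'k::field rep \<Rightarrow> 'k rep \<Rightarrow> nat" where
  "dim_Ext1 M N =
     mdim TYPE('k) (rep_dim N) (rep_dim M + rep_dim M) (Ext1_cocycles M N)
     - mdim TYPE('k) (rep_dim N) (rep_dim M + rep_dim M) (Ext1_coboundaries M N)"

definition is_brick :: "'k::field rep \<Rightarrow> bool" where
  "is_brick M \<longleftrightarrow> is_rep M \<and> dim_Hom M M = 1"

definition brick_set :: "'k::field rep list \<Rightarrow> bool" where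
  "brick_set xs \<longleftrightarrow> xs \<noteq> [] \<and> (\<forall>i<length xs. is_brick (xs ! i))
     \<and> (\<forall>i<length xs. \<forall>j<length xs. dim_Hom (xs ! i) (xs ! j) = (if i = j then 1 else 0))"

definition adjacency :: "'k::field rep list \<Rightarrow> complex mat" where
  "adjacency xs = mat (length xs) (length xs)
      (\<lambda>(i,j). of_nat (dim_Ext1 (xs ! i) (xs ! j)))"

definition fpdim_REP :: "'k::field itself \<Rightarrow> ereal" where
  "fpdim_REP ty = (SUP xs \<in> {xs :: 'k rep list. brick_set xs}. ereal (spectral_radius (adjacency xs)))"

end

theory Submission
  imports Defs
begin


lemma mat_fin_dim: "vectorspace.fin_dim (class_ring::'a::field ring) (module_mat TYPE('a) r c)"
proof -
  define T where "T = (\<lambda>v::'a vec. mat r c (\<lambda>(i,j). v $ (i*c+j)))"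
  have idx: "i < r \<Longrightarrow> j < c \<Longrightarrow> i*c+j < r*c" for i j
  proof -
    assume "i < r" "j < c"
    hence "i*c + j < i*c + c" by simp
    also have "\<dots> = (i+1)*c" by simp
    also have "\<dots> \<le> r*c" using \<open>i<r\<close> by (intro mult_right_mono) auto
    finally show ?thesis .
  qed
  interpret VV: vectorspace "class_ring::'a ring" "module_vec TYPE('a) (r*c)" by (rule vec_vs)
  interpret MM: vectorspace "class_ring::'a ring" "module_mat TYPE('a) r c" by (rule matrix_vs)
  have lm: "linear_map (class_ring::'a ring) (module_vec TYPE('a) (r*c)) (module_mat TYPE('a) r c) T"
  proof (unfold_locales)
    show "T \<in> module_hom class_ring (module_vec TYPE('a) (r*c)) (module_mat TYPE('a) r c)"
      unfolding module_hom_def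
      by (auto simp: T_def module_mat_simps module_vec_simps idx intro!: eq_matI)
  qed
  show ?thesis
  proof (rule linear_map.surj_fin_dim[OF lm])
    show "T ` carrier (module_vec TYPE('a) (r * c)) = carrier (module_mat TYPE('a) r c)"
    proof -
      have "T ` carrier (module_vec TYPE('a) (r * c)) \<subseteq> carrier (module_mat TYPE('a) r c)"
        by (auto simp: T_def module_mat_simps module_vec_simps)
      moreover have "carrier (module_mat TYPE('a) r c) \<subseteq> T ` carrier (module_vec TYPE('a) (r * c))"
      proof
        fix M :: "'a mat" assume M: "M \<in> carrier (module_mat TYPE('a) r c)"
        define v where "v = vec (r*c) (\<lambda>k. M $$ (k div c, k mod c))"
        have "T v = M"
        proof (rule eq_matI)
          fix i j assume ij: "i < dim_row M" "j < dim_col M"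
          hence "i < r" "j < c" using M by (auto simp: module_mat_simps)
          then show "T v $$ (i,j) = M $$ (i,j)" by (simp add: T_def v_def idx)
        qed (use M in \<open>auto simp: T_def module_mat_simps\<close>)
        moreover have "v \<in> carrier (module_vec TYPE('a) (r * c))" by (simp add: v_def module_vec_simps)
        ultimately show "M \<in> T ` carrier (module_vec TYPE('a) (r * c))" by blast
      qed
      ultimately show ?thesis by blast
    qed
    show "vectorspace.fin_dim class_ring (module_vec TYPE('a) (r * c))"
      using vec_space.fin_dim by blast
  qed
qed



lemma (in vectorspace) fin_gen_submodule:
  assumes fd: fin_dim and S: "submodule K S V"
  shows "\<exists>A. finite A \<and> A \<subseteq> S \<and> span A = S"
proof -
  have SC: "S \<subseteq> carrier V" using S by (simp add: submodule_def)
  define P where "P k = (\<exists>A. A \<subseteq> S \<and> finite A \<and> card A = k \<and> lin_indpt A)" for k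
  have P0: "P 0" unfolding P_def by (rule exI[of _ "{}"]) (auto simp: lin_dep_def)
  have bd: "P k \<Longrightarrow> k \<le> dim" for k
    unfolding P_def using li_le_dim(2)[OF fd] SC by blast
  have "P (Greatest P)" by (rule GreatestI_nat[of P 0 dim, OF P0 bd])
  then obtain A where A: "A \<subseteq> S" "finite A" "card A = Greatest P" "lin_indpt A"
    unfolding P_def by blast
  have AC: "A \<subseteq> carrier V" using A SC by blast
  have sub1: "span A \<subseteq> S" by (rule span_is_subset[OF A(1) S])
  have "S \<subseteq> span A"
  proof
    fix w assume w: "w \<in> S"
    show "w \<in> span A"
    proof (rule ccontr)
      assume nw: "w \<notin> span A"
      have wA: "w \<notin> A" using nw in_own_span[OF AC] by blast
      have wC: "w \<in> carrier V" using w SC by blast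
      have li: "lin_indpt (A \<union> {w})" using lin_dep_iff_in_span[OF AC A(4) wC wA] nw by blast
      have "P (card A + 1)" unfolding P_def
        by (rule exI[of _ "A \<union> {w}"]) (use A w wA li in auto)
      hence "card A + 1 \<le> Greatest P" by (rule Greatest_le_nat[OF _ bd])
      with A(3) show False by simp
    qed
  qed
  with sub1 A show ?thesis by blast
qed

lemma mdim_eq:
  assumes S: "submodule class_ring S (module_mat TYPE('k::field) r c)"
  shows "mdim TYPE('k) r c S = (LEAST n. \<exists>A. finite A \<and> card A = n \<and> A \<subseteq> S \<and>
      module.span class_ring (module_mat TYPE('k) r c) A = S)"
proof -
  interpret MM: vectorspace "class_ring::'k ring" "module_mat TYPE('k) r c" by (rule matrix_vs)
  have eq: "A \<subseteq> S \<Longrightarrow> module.span class_ring ((module_mat TYPE('k) r c)\<lparr>carrier := S\<rparr>) A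
      = MM.span A" for A
    by (rule MM.span_li_not_depend(1)[OF _ S])
  have sub: "subspace class_ring S (module_mat TYPE('k) r c)"
    using S MM.vectorspace_axioms by (simp add: subspace_def)
  interpret SS: vectorspace "class_ring::'k ring" "(module_mat TYPE('k) r c)\<lparr>carrier := S\<rparr>"
    by (rule MM.subspace_is_vs[OF sub])
  show ?thesis unfolding mdim_def SS.dim_def
    by (rule arg_cong[where f = Least], rule ext) (use eq in auto)
qed

lemma mdim_fin:
  assumes S: "submodule class_ring S (module_mat TYPE('k::field) r c)"
  shows "\<exists>A. finite A \<and> A \<subseteq> S \<and> module.span class_ring (module_mat TYPE('k) r c) A = S"
proof -
  interpret MM: vectorspace "class_ring::'k ring" "module_mat TYPE('k) r c" by (rule matrix_vs)
  show ?thesis by (rule MM.fin_gen_submodule[OF _ S]) (rule mat_fin_dim)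
qed



lemma submodule_matI:
  assumes "S \<subseteq> carrier_mat r c" "0\<^sub>m r c \<in> S"
    "\<And>x y. x \<in> S \<Longrightarrow> y \<in> S \<Longrightarrow> x + y \<in> S"
    "\<And>k x. x \<in> S \<Longrightarrow> k \<cdot>\<^sub>m x \<in> S"
  shows "submodule (class_ring::'k::field ring) S (module_mat TYPE('k) r c)"
proof -
  interpret MM: vectorspace "class_ring::'k ring" "module_mat TYPE('k) r c" by (rule matrix_vs)
  show ?thesis unfolding submodule_def using assms MM.module_axioms
    by (auto simp: module_mat_simps)
qed

lemma submodule_line:
  assumes w: "w \<in> carrier_mat r c"
  shows "submodule (class_ring::'k::field ring) {k \<cdot>\<^sub>m w | k. True} (module_mat TYPE('k) r c)"
proof (rule submodule_matI)
  show "{k \<cdot>\<^sub>m w |k. True} \<subseteq> carrier_mat r c" using w by auto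
  have "0 \<cdot>\<^sub>m w = 0\<^sub>m r c" using w by (intro eq_matI) auto
  then show "0\<^sub>m r c \<in> {k \<cdot>\<^sub>m w |k. True}" by (metis (mono_tags, lifting) mem_Collect_eq)
  fix x y assume "x \<in> {k \<cdot>\<^sub>m w |k. True}" "y \<in> {k \<cdot>\<^sub>m w |k. True}"
  then obtain a b where "x = a \<cdot>\<^sub>m w" "y = b \<cdot>\<^sub>m w" by auto
  moreover have "a \<cdot>\<^sub>m w + b \<cdot>\<^sub>m w = (a + b) \<cdot>\<^sub>m w" using w by (intro eq_matI) (auto simp: algebra_simps)
  ultimately show "x + y \<in> {k \<cdot>\<^sub>m w |k. True}" by auto
next
  fix k x assume "x \<in> {k \<cdot>\<^sub>m w |k. True}"
  then obtain a where "x = a \<cdot>\<^sub>m w" by auto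
  moreover have "k \<cdot>\<^sub>m (a \<cdot>\<^sub>m w) = (k * a) \<cdot>\<^sub>m w" using w by (intro eq_matI) auto
  ultimately show "k \<cdot>\<^sub>m x \<in> {k \<cdot>\<^sub>m w |k. True}" by auto
qed

lemma span_small:
  assumes A: "finite A" "card A \<le> 1" "A \<subseteq> carrier_mat r c"
  shows "\<exists>w \<in> carrier_mat r c. module.span (class_ring::'k::field ring) (module_mat TYPE('k) r c) A
     \<subseteq> {k \<cdot>\<^sub>m w | k. True}"
proof -
  interpret MM: vectorspace "class_ring::'k ring" "module_mat TYPE('k) r c" by (rule matrix_vs)
  obtain w where w: "w \<in> carrier_mat r c" "A \<subseteq> {w}"
  proof (cases "A = {}")
    case True then show ?thesis using that[of "0\<^sub>m r c"] by auto
  next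
    case False
    then obtain w where "A = {w}" using A card_le_Suc0_iff_eq[OF A(1)] by (metis card_1_singletonE card_0_eq le_Suc_eq One_nat_def le_zero_eq)
    then show ?thesis using that[of w] A by auto
  qed
  have "{w} \<subseteq> {k \<cdot>\<^sub>m w | k. True}" by (auto intro!: exI[of _ 1])
  with w have "A \<subseteq> {k \<cdot>\<^sub>m w | k. True}" by blast
  then have "MM.span A \<subseteq> {k \<cdot>\<^sub>m w | k. True}" by (rule MM.span_is_subset[OF _ submodule_line[OF w(1)]])
  with w show ?thesis by blast
qed

lemma mdim_le1:
  assumes S: "submodule class_ring S (module_mat TYPE('k::field) r c)"
    and d: "mdim TYPE('k) r c S \<le> 1"
  shows "\<exists>w \<in> carrier_mat r c. S \<subseteq> {k \<cdot>\<^sub>m w | k. True}"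
proof -
  interpret MM: vectorspace "class_ring::'k ring" "module_mat TYPE('k) r c" by (rule matrix_vs)
  let ?P = "\<lambda>n. \<exists>A. finite A \<and> card A = n \<and> A \<subseteq> S \<and> MM.span A = S"
  obtain A0 where "finite A0" "A0 \<subseteq> S" "MM.span A0 = S" using mdim_fin[OF S] by blast
  then have "?P (card A0)" by blast
  then have "?P (Least ?P)" by (rule LeastI)
  then obtain A where A: "finite A" "card A = mdim TYPE('k) r c S" "A \<subseteq> S" "MM.span A = S"
    unfolding mdim_eq[OF S] by blast
  have SC: "S \<subseteq> carrier_mat r c" using S by (simp add: submodule_def module_mat_simps)
  show ?thesis using span_small[of A r c] A d SC by auto
qed

lemma mdim_zero:
  "mdim TYPE('k::field) r c {0\<^sub>m r c} = 0"
proof -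
  interpret MM: vectorspace "class_ring::'k ring" "module_mat TYPE('k) r c" by (rule matrix_vs)
  have S: "submodule class_ring {0\<^sub>m r c} (module_mat TYPE('k) r c)"
    by (rule submodule_matI) auto
  have "MM.span {} \<subseteq> {0\<^sub>m r c}" by (rule MM.span_is_subset[OF _ S]) auto
  moreover have "0\<^sub>m r c \<in> MM.span {}"
    using submodule.zero_closed[OF MM.span_is_submodule[of "{}"]] by (simp add: module_mat_simps)
  ultimately have "MM.span {} = {0\<^sub>m r c}" by blast
  then show ?thesis unfolding mdim_eq[OF S] by (intro Least_eq_0) (rule exI[of _ "{}"], auto)
qed

lemma mdim_one:
  assumes S: "submodule class_ring S (module_mat TYPE('k::field) r c)"
    and w: "w \<in> S" "w \<noteq> 0\<^sub>m r c" and Sw: "S \<subseteq> {k \<cdot>\<^sub>m w | k. True}"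
  shows "mdim TYPE('k) r c S = 1"
proof -
  interpret MM: vectorspace "class_ring::'k ring" "module_mat TYPE('k) r c" by (rule matrix_vs)
  have SC: "S \<subseteq> carrier_mat r c" using S by (simp add: submodule_def module_mat_simps)
  have wC: "w \<in> carrier_mat r c" using w SC by blast
  have sp: "MM.span {w} = S"
  proof
    show "MM.span {w} \<subseteq> S" by (rule MM.span_is_subset[OF _ S]) (use w in auto)
    show "S \<subseteq> MM.span {w}"
    proof
      fix x assume "x \<in> S"
      then obtain k where x: "x = k \<cdot>\<^sub>m w" using Sw by blast
      have "w \<in> MM.span {w}" using MM.in_own_span[of "{w}"] wC by (auto simp: module_mat_simps)
      then show "x \<in> MM.span {w}"
        using submodule.smult_closed[OF MM.span_is_submodule[of "{w}"], of k w] wC x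
        by (auto simp: module_mat_simps)
    qed
  qed
  show ?thesis unfolding mdim_eq[OF S]
  proof (rule Least_equality)
    show "\<exists>A. finite A \<and> card A = 1 \<and> A \<subseteq> S \<and> MM.span A = S"
      by (rule exI[of _ "{w}"]) (use sp w in auto)
    fix n assume "\<exists>A. finite A \<and> card A = n \<and> A \<subseteq> S \<and> MM.span A = S"
    then obtain A where A: "finite A" "card A = n" "A \<subseteq> S" "MM.span A = S" by blast
    show "1 \<le> n"
    proof (rule ccontr)
      assume "\<not> 1 \<le> n"
      then have "card A = 0" using A(2) by simp
      with A(1) have "A = {}" by simp
      have Z: "submodule class_ring {0\<^sub>m r c} (module_mat TYPE('k) r c)"
        by (rule submodule_matI) auto
      have "MM.span {} \<subseteq> {0\<^sub>m r c}" by (rule MM.span_is_subset[OF _ Z]) auto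
      then show False using A \<open>A = {}\<close> w by auto
    qed
  qed
qed



lemma mdim_two: "mdim TYPE('k::field) 1 2 (carrier_mat 1 2) = 2"
proof -
  interpret MM: vectorspace "class_ring::'k ring" "module_mat TYPE('k) 1 2" by (rule matrix_vs)
  have S: "submodule class_ring (carrier_mat 1 2) (module_mat TYPE('k) 1 2)"
    by (rule submodule_matI) auto
  define e1 :: "'k mat" where "e1 = mat 1 2 (\<lambda>(i,j). if j = 0 then 1 else 0)"
  define e2 :: "'k mat" where "e2 = mat 1 2 (\<lambda>(i,j). if j = 1 then 1 else 0)"
  have e: "e1 \<in> carrier_mat 1 2" "e2 \<in> carrier_mat 1 2" "e1 \<noteq> e2"
    unfolding e1_def e2_def by (auto simp: mat_eq_iff)
  have sp: "MM.span {e1, e2} = carrier_mat 1 2"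
  proof
    show "MM.span {e1, e2} \<subseteq> carrier_mat 1 2" by (rule MM.span_is_subset[OF _ S]) (use e in auto)
    show "carrier_mat 1 2 \<subseteq> MM.span {e1, e2}"
    proof
      fix X :: "'k mat" assume X: "X \<in> carrier_mat 1 2"
      have sub: "submodule class_ring (MM.span {e1, e2}) (module_mat TYPE('k) 1 2)"
        by (rule MM.span_is_submodule) (use e in \<open>auto simp: module_mat_simps\<close>)
      have own: "{e1, e2} \<subseteq> MM.span {e1, e2}" by (rule MM.in_own_span) (use e in \<open>auto simp: module_mat_simps\<close>)
      have "X $$ (0,0) \<cdot>\<^sub>m e1 \<in> MM.span {e1, e2}" "X $$ (0,1) \<cdot>\<^sub>m e2 \<in> MM.span {e1, e2}"
        using submodule.smult_closed[OF sub] own by (auto simp: module_mat_simps)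
      then have "X $$ (0,0) \<cdot>\<^sub>m e1 + X $$ (0,1) \<cdot>\<^sub>m e2 \<in> MM.span {e1, e2}"
        using submodule.m_closed[OF sub] by (auto simp: module_mat_simps)
      moreover have "X $$ (0,0) \<cdot>\<^sub>m e1 + X $$ (0,1) \<cdot>\<^sub>m e2 = X"
      proof (rule eq_matI)
        fix i j assume "i < dim_row X" "j < dim_col X"
        then have "i = 0" "j = 0 \<or> j = 1" using X by auto
        then show "(X $$ (0,0) \<cdot>\<^sub>m e1 + X $$ (0,1) \<cdot>\<^sub>m e2) $$ (i, j) = X $$ (i, j)"
          unfolding e1_def e2_def by auto
      qed (use X e1_def e2_def in auto)
      ultimately show "X \<in> MM.span {e1, e2}" by simp
    qed
  qed
  show ?thesis unfolding mdim_eq[OF S]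
  proof (rule Least_equality)
    show "\<exists>A. finite A \<and> card A = 2 \<and> A \<subseteq> carrier_mat 1 2 \<and> MM.span A = carrier_mat 1 2"
      by (rule exI[of _ "{e1, e2}"]) (use sp e in auto)
    fix n assume "\<exists>A. finite A \<and> card A = n \<and> A \<subseteq> carrier_mat 1 2 \<and> MM.span A = carrier_mat 1 2"
    then obtain A where A: "finite A" "card A = n" "A \<subseteq> carrier_mat 1 2" "MM.span A = carrier_mat 1 2" by blast
    show "2 \<le> n"
    proof (rule ccontr)
      assume "\<not> 2 \<le> n"
      then have "card A \<le> 1" using A by simp
      from span_small[OF A(1) this A(3)] obtain w where w: "w \<in> carrier_mat 1 2"
        "MM.span A \<subseteq> {k \<cdot>\<^sub>m w | k. True}" by blast
      then obtain a b where ab: "e1 = a \<cdot>\<^sub>m w" "e2 = b \<cdot>\<^sub>m w" using A(4) e by blast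
      have "e1 $$ (0,0) = a * w $$ (0,0)" "e1 $$ (0,1) = a * w $$ (0,1)" "e2 $$ (0,1) = b * w $$ (0,1)"
        using ab w by auto
      then show False unfolding e1_def e2_def by auto
    qed
  qed
qed

lemma brick_dim1:
  fixes M :: "'k::field rep"
  assumes br: "is_brick M"
  shows "rep_dim M = 1"
proof -
  define n where "n = rep_dim M"
  define A where "A = act1 M"
  define B where "B = act2 M"
  have rep: "A \<in> carrier_mat n n" "B \<in> carrier_mat n n" "A * B = B * A"
    using br unfolding is_brick_def is_rep_def n_def A_def B_def by auto
  have H: "Hom_rep M M = {F \<in> carrier_mat n n. A * F = F * A \<and> B * F = F * B}"
    unfolding Hom_rep_def n_def A_def B_def by simp
  have d1: "mdim TYPE('k) n n (Hom_rep M M) = 1"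
    using br unfolding is_brick_def dim_Hom_def n_def by simp
  have sub: "submodule class_ring (Hom_rep M M) (module_mat TYPE('k) n n)"
    unfolding H
  proof (rule submodule_matI)
    show "0\<^sub>m n n \<in> {F \<in> carrier_mat n n. A * F = F * A \<and> B * F = F * B}"
      using rep by (simp add: left_mult_zero_mat right_mult_zero_mat)
    fix x y assume "x \<in> {F \<in> carrier_mat n n. A * F = F * A \<and> B * F = F * B}"
      "y \<in> {F \<in> carrier_mat n n. A * F = F * A \<and> B * F = F * B}"
    then show "x + y \<in> {F \<in> carrier_mat n n. A * F = F * A \<and> B * F = F * B}"
      using rep by (auto simp: mult_add_distrib_mat add_mult_distrib_mat)
  next
    fix k x assume "x \<in> {F \<in> carrier_mat n n. A * F = F * A \<and> B * F = F * B}"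
    then show "k \<cdot>\<^sub>m x \<in> {F \<in> carrier_mat n n. A * F = F * A \<and> B * F = F * B}"
      using rep by (auto simp: mult_smult_distrib mult_smult_assoc_mat)
  qed auto
  consider "n = 0" | "n = 1" | "n \<ge> 2" by linarith
  then show ?thesis
  proof cases
    case 1
    have "Hom_rep M M = {0\<^sub>m 0 0}" unfolding H 1 using rep 1
      by (auto simp: mat_eq_iff)
    then have "mdim TYPE('k) n n (Hom_rep M M) = 0" using 1 mdim_zero by simp
    with d1 show ?thesis by simp
  next
    case 2 then show ?thesis by (simp add: n_def)
  next
    case 3
    obtain w where w: "w \<in> carrier_mat n n" "Hom_rep M M \<subseteq> {k \<cdot>\<^sub>m w | k. True}"
      using mdim_le1[OF sub] d1 by auto
    have "1\<^sub>m n \<in> Hom_rep M M" unfolding H using rep by simp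
    then obtain a where a: "1\<^sub>m n = a \<cdot>\<^sub>m w" using w by blast
    have "A \<in> Hom_rep M M" unfolding H using rep by simp
    then obtain al where al: "A = al \<cdot>\<^sub>m w" using w by blast
    have "B \<in> Hom_rep M M" unfolding H using rep by simp
    then obtain be where be: "B = be \<cdot>\<^sub>m w" using w by blast
    have n0: "0 < n" using 3 by simp
    have a0: "a \<noteq> 0"
    proof
      assume "a = 0"
      then have "(1\<^sub>m n :: 'k mat) $$ (0,0) = 0" using a w n0 by simp
      then show False using n0 by simp
    qed
    have scal: "al \<cdot>\<^sub>m w = (al / a) \<cdot>\<^sub>m 1\<^sub>m n" using a a0 w
      by (intro eq_matI) (auto simp: field_simps)
    have scal2: "be \<cdot>\<^sub>m w = (be / a) \<cdot>\<^sub>m 1\<^sub>m n" using a a0 w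
      by (intro eq_matI) (auto simp: field_simps)
    define E :: "'k mat" where "E = mat n n (\<lambda>(i,j). if i = 0 \<and> j = 0 then 1 else 0)"
    have EC: "E \<in> carrier_mat n n" unfolding E_def by simp
    have comm: "(s \<cdot>\<^sub>m 1\<^sub>m n) * E = E * (s \<cdot>\<^sub>m 1\<^sub>m n)" for s :: 'k
      using mult_smult_assoc_mat[OF one_carrier_mat EC, of s] mult_smult_distrib[OF EC one_carrier_mat, of s]
        left_mult_one_mat[OF EC] right_mult_one_mat[OF EC] by simp
    have "E \<in> Hom_rep M M" unfolding H using EC comm al be scal scal2 by simp
    then obtain e where e: "E = e \<cdot>\<^sub>m w" using w by blast
    have "E $$ (0,0) = e * w $$ (0,0)" "E $$ (1,1) = e * w $$ (1,1)"
      "(1\<^sub>m n :: 'k mat) $$ (1,1) = a * w $$ (1,1)"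
      using e a w 3 by auto
    then show ?thesis using 3 unfolding E_def by auto
  qed
qed



definition m11 :: "'a::comm_ring_1 \<Rightarrow> 'a mat" where "m11 a = mat 1 1 (\<lambda>_. a)"

lemma m11_carrier[simp]: "m11 a \<in> carrier_mat 1 1" by (simp add: m11_def)
lemma m11_dims[simp]: "dim_row (m11 a) = 1" "dim_col (m11 a) = 1" by (simp_all add: m11_def)
lemma m11_idx[simp]: "m11 a $$ (0,0) = a" by (simp add: m11_def)
lemma m11_form: "X \<in> carrier_mat 1 1 \<Longrightarrow> X = m11 (X $$ (0,0))"
  by (auto simp: m11_def mat_eq_iff)
lemma m11_mult[simp]: "m11 a * m11 b = m11 (a * b)"
  by (auto simp: m11_def mat_eq_iff scalar_prod_def)
lemma m11_add[simp]: "m11 a + m11 b = m11 (a + b)"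
  by (auto simp: m11_def mat_eq_iff)
lemma m11_minus[simp]: "m11 a - m11 b = m11 (a - b)"
  by (auto simp: m11_def mat_eq_iff)
lemma m11_eq[simp]: "(m11 a = m11 b) = (a = b)"
  by (auto simp: m11_def mat_eq_iff)
lemma m11_zero: "0\<^sub>m 1 1 = m11 0"
  by (auto simp: m11_def mat_eq_iff)
lemma m11_one: "1\<^sub>m 1 = m11 1"
  by (auto simp: m11_def mat_eq_iff)
lemma m11_smult[simp]: "k \<cdot>\<^sub>m m11 a = m11 (k * a)"
  by (auto simp: m11_def mat_eq_iff)

lemma hpair11:
  shows "hpair (m11 g) (m11 h) \<in> carrier_mat 1 2" "hpair (m11 g) (m11 h) $$ (0,0) = g" "hpair (m11 g) (m11 h) $$ (0,1) = h"
  unfolding hpair_def by (auto simp: four_block_mat_def m11_def)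

lemma hpair_eq12: 
  assumes "X \<in> carrier_mat 1 2"
  shows "(X = hpair (m11 g) (m11 h)) = (X $$ (0,0) = g \<and> X $$ (0,1) = h)"
proof -
  have "(X = hpair (m11 g) (m11 h)) = (\<forall>i<1. \<forall>j<2. X $$ (i,j) = hpair (m11 g) (m11 h) $$ (i,j))"
    using assms hpair11(1)[of g h] by (auto simp: mat_eq_iff)
  also have "\<dots> = (X $$ (0,0) = hpair (m11 g) (m11 h) $$ (0,0) \<and> X $$ (0,1) = hpair (m11 g) (m11 h) $$ (0,1))"
    by (auto simp: less_2_cases_iff)
  finally show ?thesis using hpair11[of g h] by simp
qed

lemma rep11:
  assumes "is_rep M" "rep_dim M = 1"
  shows "act1 M = m11 (act1 M $$ (0,0))" "act2 M = m11 (act2 M $$ (0,0))"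
  using assms unfolding is_rep_def by (auto intro: m11_form)



lemma obtain11: assumes "X \<in> carrier_mat 1 1" obtains x where "X = m11 x"
  using m11_form[OF assms] by blast

lemma m11_carrier'[simp]: "m11 a \<in> carrier_mat (Suc 0) (Suc 0)" by (simp add: m11_def)

lemma cocI: "G \<in> carrier_mat (rep_dim N) (rep_dim M) \<Longrightarrow> H \<in> carrier_mat (rep_dim N) (rep_dim M) \<Longrightarrow>
  act1 N * H + G * act2 M = act2 N * G + H * act1 M \<Longrightarrow> X = hpair G H \<Longrightarrow> X \<in> Ext1_cocycles M N"
  unfolding Ext1_cocycles_def by blast

lemma cocE: assumes "X \<in> Ext1_cocycles M N"
  obtains G H where "G \<in> carrier_mat (rep_dim N) (rep_dim M)" "H \<in> carrier_mat (rep_dim N) (rep_dim M)"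
  "act1 N * H + G * act2 M = act2 N * G + H * act1 M" "X = hpair G H"
  using assms unfolding Ext1_cocycles_def by blast

lemma cobI: "F \<in> carrier_mat (rep_dim N) (rep_dim M) \<Longrightarrow>
  X = hpair (act1 N * F - F * act1 M) (act2 N * F - F * act2 M) \<Longrightarrow> X \<in> Ext1_coboundaries M N"
  unfolding Ext1_coboundaries_def by blast

lemma cobE: assumes "X \<in> Ext1_coboundaries M N"
  obtains F where "F \<in> carrier_mat (rep_dim N) (rep_dim M)" 
  "X = hpair (act1 N * F - F * act1 M) (act2 N * F - F * act2 M)"
  using assms unfolding Ext1_coboundaries_def by blast

lemma dimHom_same:
  fixes M N :: "'k::field rep"
  assumes M: "is_rep M" "rep_dim M = 1" and N: "is_rep N" "rep_dim N = 1"
    and p: "act1 M $$ (0,0) = act1 N $$ (0,0)" "act2 M $$ (0,0) = act2 N $$ (0,0)"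
  shows "dim_Hom M N = 1"
proof -
  define a where "a = act1 M $$ (0,0)"
  define b where "b = act2 M $$ (0,0)"
  have eqs: "act1 M = m11 a" "act2 M = m11 b" "act1 N = m11 a" "act2 N = m11 b"
    using rep11[OF M] rep11[OF N] p unfolding a_def b_def by metis+
  have H: "Hom_rep M N = carrier_mat 1 1"
  proof -
    have "m11 a * F = F * m11 a \<and> m11 b * F = F * m11 b" if "F \<in> carrier_mat 1 1" for F
      using that by (rule obtain11) (simp add: mult.commute)
    then show ?thesis unfolding Hom_rep_def M(2) N(2) eqs by auto
  qed
  have S: "submodule class_ring (carrier_mat 1 1) (module_mat TYPE('k) 1 1)"
    by (rule submodule_matI) auto
  have sub1: "carrier_mat 1 1 \<subseteq> {k \<cdot>\<^sub>m (1\<^sub>m 1 :: 'k mat) |k. True}"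
  proof
    fix X :: "'k mat" assume "X \<in> carrier_mat 1 1"
    then obtain x where "X = m11 x" by (rule obtain11)
    then have "X = x \<cdot>\<^sub>m 1\<^sub>m 1" unfolding m11_one by simp
    then show "X \<in> {k \<cdot>\<^sub>m (1\<^sub>m 1 :: 'k mat) |k. True}" by blast
  qed
  have "m11 1 \<noteq> (m11 0 :: 'k mat)" by simp
  then have ne: "1\<^sub>m 1 \<noteq> (0\<^sub>m 1 1 :: 'k mat)" unfolding m11_one m11_zero .
  have "mdim TYPE('k) 1 1 (carrier_mat 1 1) = 1"
    by (rule mdim_one[OF S _ ne sub1]) simp
  then show ?thesis unfolding dim_Hom_def H using M N by simp
qed

lemma dimExt_same:
  fixes M :: "'k::field rep"
  assumes M: "is_rep M" "rep_dim M = 1"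
  shows "dim_Ext1 M M = 2"
proof -
  define a where "a = act1 M $$ (0,0)"
  define b where "b = act2 M $$ (0,0)"
  have eqs: "act1 M = m11 a" "act2 M = m11 b"
    using rep11[OF M] unfolding a_def b_def by metis+
  have Z: "Ext1_cocycles M M = carrier_mat 1 2"
  proof
    show "Ext1_cocycles M M \<subseteq> carrier_mat 1 2"
    proof
      fix X assume "X \<in> Ext1_cocycles M M"
      then obtain G H where GH: "G \<in> carrier_mat 1 1" "H \<in> carrier_mat 1 1" "X = hpair G H"
        using M(2) by (metis cocE)
      obtain g h where "G = m11 g" "H = m11 h" using GH(1,2) obtain11 by metis
      then show "X \<in> carrier_mat 1 2" using GH(3) hpair11 by simp
    qed
    show "carrier_mat 1 2 \<subseteq> Ext1_cocycles M M"
    proof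
      fix X :: "'k mat" assume X: "X \<in> carrier_mat 1 2"
      have "X = hpair (m11 (X $$ (0,0))) (m11 (X $$ (0,1)))" using hpair_eq12[OF X] by simp
      moreover have "act1 M * m11 h + m11 g * act2 M = act2 M * m11 g + m11 h * act1 M" for g h
        unfolding eqs by (simp add: algebra_simps)
      ultimately show "X \<in> Ext1_cocycles M M"
        by (intro cocI[of "m11 (X $$ (0,0))" M M "m11 (X $$ (0,1))"]) (simp_all add: M(2))
    qed
  qed
  have B: "Ext1_coboundaries M M = {0\<^sub>m 1 2}"
  proof
    have z: "0\<^sub>m 1 2 = hpair (m11 0) (m11 (0::'k))" by (subst hpair_eq12) auto
    show "Ext1_coboundaries M M \<subseteq> {0\<^sub>m 1 2}"
    proof
      fix X assume "X \<in> Ext1_coboundaries M M"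
      then obtain F where F: "F \<in> carrier_mat 1 1"
        "X = hpair (act1 M * F - F * act1 M) (act2 M * F - F * act2 M)"
        using M(2) by (metis cobE)
      obtain f where "F = m11 f" using F(1) by (rule obtain11)
      then have "X = hpair (m11 0) (m11 0)" using F(2) unfolding eqs by (simp add: mult.commute)
      then show "X \<in> {0\<^sub>m 1 2}" using z by simp
    qed
    have "hpair (m11 0) (m11 0) = hpair (act1 M * m11 0 - m11 0 * act1 M) (act2 M * m11 0 - m11 0 * act2 M)"
      unfolding eqs by simp
    then show "{0\<^sub>m 1 2} \<subseteq> Ext1_coboundaries M M"
      using z by (auto intro!: cobI[of "m11 0"] simp: M(2))
  qed
  show ?thesis unfolding dim_Ext1_def Z B M(2) one_add_one mdim_two mdim_zero by simp
qed

lemma dimExt_diff: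
  fixes M N :: "'k::field rep"
  assumes M: "is_rep M" "rep_dim M = 1" and N: "is_rep N" "rep_dim N = 1"
    and p: "act1 M $$ (0,0) \<noteq> act1 N $$ (0,0) \<or> act2 M $$ (0,0) \<noteq> act2 N $$ (0,0)"
  shows "dim_Ext1 M N = 0"
proof -
  define a where "a = act1 M $$ (0,0)"
  define b where "b = act2 M $$ (0,0)"
  define cc where "cc = act1 N $$ (0,0)"
  define d where "d = act2 N $$ (0,0)"
  have eqs: "act1 M = m11 a" "act2 M = m11 b" "act1 N = m11 cc" "act2 N = m11 d"
    using rep11[OF M] rep11[OF N] unfolding a_def b_def cc_def d_def by metis+
  have p': "a \<noteq> cc \<or> b \<noteq> d" using p unfolding a_def b_def cc_def d_def .
  have "Ext1_cocycles M N = Ext1_coboundaries M N"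
  proof
    show "Ext1_coboundaries M N \<subseteq> Ext1_cocycles M N"
    proof
      fix X assume "X \<in> Ext1_coboundaries M N"
      then obtain F where F: "F \<in> carrier_mat 1 1"
        "X = hpair (act1 N * F - F * act1 M) (act2 N * F - F * act2 M)"
        using M(2) N(2) by (metis cobE)
      obtain f where f: "F = m11 f" using F(1) by (rule obtain11)
      have "act1 N * (act2 N * F - F * act2 M) + (act1 N * F - F * act1 M) * act2 M =
            act2 N * (act1 N * F - F * act1 M) + (act2 N * F - F * act2 M) * act1 M"
        unfolding eqs f by (simp add: algebra_simps)
      moreover have "act1 N * F - F * act1 M \<in> carrier_mat 1 1" "act2 N * F - F * act2 M \<in> carrier_mat 1 1"
        unfolding eqs f by simp_all
      ultimately show "X \<in> Ext1_cocycles M N" using F(2) by (intro cocI) (simp_all add: M(2) N(2))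
    qed
    show "Ext1_cocycles M N \<subseteq> Ext1_coboundaries M N"
    proof
      fix X assume "X \<in> Ext1_cocycles M N"
      then obtain G H where GH: "G \<in> carrier_mat 1 1" "H \<in> carrier_mat 1 1" "X = hpair G H"
        "act1 N * H + G * act2 M = act2 N * G + H * act1 M"
        using M(2) N(2) by (metis cocE)
      obtain g where g: "G = m11 g" using GH(1) by (rule obtain11)
      obtain h where h: "H = m11 h" using GH(2) by (rule obtain11)
      have eq: "cc * h + g * b = d * g + h * a"
        using GH(4) unfolding eqs g h by simp
      obtain f where f: "cc * f - f * a = g" "d * f - f * b = h"
      proof (cases "cc = a")
        case False
        then have ca: "cc - a \<noteq> 0" by simp
        show ?thesis
        proof (rule that[of "g / (cc - a)"])
          have "cc * (g / (cc - a)) - g / (cc - a) * a = (cc - a) * (g / (cc - a))"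
            by (simp only: left_diff_distrib mult.commute)
          then show "cc * (g / (cc - a)) - g / (cc - a) * a = g" using ca by simp
          have "h * (cc - a) = g * (d - b)" using eq by (simp add: algebra_simps)
          have "d * (g / (cc - a)) - g / (cc - a) * b = (d - b) * (g / (cc - a))"
            by (simp only: left_diff_distrib mult.commute)
          also have "\<dots> = (g * (d - b)) / (cc - a)" by (simp add: mult.commute)
          also have "\<dots> = (h * (cc - a)) / (cc - a)" using \<open>h * (cc - a) = g * (d - b)\<close> by simp
          also have "\<dots> = h" using ca by simp
          finally show "d * (g / (cc - a)) - g / (cc - a) * b = h" .
        qed
      next
        case True
        then have db: "d - b \<noteq> 0" using p' by auto
        show ?thesis
        proof (rule that[of "h / (d - b)"])
          have "d * (h / (d - b)) - h / (d - b) * b = (d - b) * (h / (d - b))"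
            by (simp only: left_diff_distrib mult.commute)
          then show "d * (h / (d - b)) - h / (d - b) * b = h" using db by simp
          have "g * (d - b) = 0" using eq True by (simp add: algebra_simps) (metis eq_commute)
          then have "g = 0" using db by simp
          then show "cc * (h / (d - b)) - h / (d - b) * a = g" using True by simp
        qed
      qed
      have "X = hpair (act1 N * m11 f - m11 f * act1 M) (act2 N * m11 f - m11 f * act2 M)"
        unfolding GH(3) eqs g h using f by (simp add: mult.commute)
      then show "X \<in> Ext1_coboundaries M N" by (intro cobI[of "m11 f"]) (simp_all add: M(2) N(2))
    qed
  qed
  then show ?thesis unfolding dim_Ext1_def by simp
qed



lemma spec2:
  assumes n: "0 < n"
  shows "spectral_radius (mat n n (\<lambda>(i,j). if i = j then 2 else 0) :: complex mat) = 2"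
proof -
  define D :: "complex mat" where "D = mat n n (\<lambda>(i,j). if i = j then 2 else 0)"
  have Dv: "D *\<^sub>v v = 2 \<cdot>\<^sub>v v" if v: "v \<in> carrier_vec n" for v
  proof (rule eq_vecI)
    fix i assume "i < dim_vec (2 \<cdot>\<^sub>v v)"
    then have i: "i < n" using v by simp
    have "(D *\<^sub>v v) $ i = (\<Sum>j\<in>{0..<n}. (if i = j then 2 else 0) * v $ j)"
      using i v by (simp add: D_def scalar_prod_def)
    also have "\<dots> = (\<Sum>j\<in>{0..<n}. if i = j then 2 * v $ j else 0)"
      by (rule sum.cong) auto
    also have "\<dots> = 2 * v $ i" using i by (simp add: sum.delta)
    finally show "(D *\<^sub>v v) $ i = (2 \<cdot>\<^sub>v v) $ i" using i v by simp
  qed (use v in \<open>simp add: D_def\<close>)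
  have sp: "spectrum D = {2}"
  proof
    show "spectrum D \<subseteq> {2}"
    proof
      fix k assume "k \<in> spectrum D"
      then obtain v where v: "v \<in> carrier_vec n" "v \<noteq> 0\<^sub>v n" "D *\<^sub>v v = k \<cdot>\<^sub>v v"
        unfolding spectrum_def eigenvalue_def eigenvector_def by (auto simp: D_def)
      obtain i where i: "i < n" "v $ i \<noteq> 0" using v(1,2) by (auto simp: vec_eq_iff)
      have "(k \<cdot>\<^sub>v v) $ i = (2 \<cdot>\<^sub>v v) $ i" using v(3) Dv[OF v(1)] by simp
      then have "k * v $ i = 2 * v $ i" using i v by simp
      then show "k \<in> {2}" using i by simp
    qed
    have "eigenvector D (unit_vec n 0) 2"
      unfolding eigenvector_def using Dv[of "unit_vec n 0"] n
      by (auto simp: D_def vec_eq_iff)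
    then show "{2} \<subseteq> spectrum D" unfolding spectrum_def eigenvalue_def by auto
  qed
  show ?thesis unfolding D_def[symmetric] spectral_radius_def sp by simp
qed

theorem theorem7p4:
  shows "fpdim_REP TYPE('k::alg_closed_field) = 2"
proof -
  have all: "spectral_radius (adjacency xs) = 2" if bs: "brick_set xs" for xs :: "'k rep list"
  proof -
    define n where "n = length xs"
    have n: "0 < n" using bs unfolding brick_set_def n_def by auto
    have br: "\<And>i. i < n \<Longrightarrow> is_rep (xs ! i) \<and> rep_dim (xs ! i) = 1"
      using bs brick_dim1 unfolding brick_set_def n_def is_brick_def by blast
    have "adjacency xs = mat n n (\<lambda>(i,j). if i = j then 2 else 0)"
    proof (rule eq_matI)
      fix i j assume "i < dim_row (mat n n (\<lambda>(i,j). if i = j then 2 else 0) :: complex mat)"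
        "j < dim_col (mat n n (\<lambda>(i,j). if i = j then 2 else 0) :: complex mat)"
      then have ij: "i < n" "j < n" by auto
      show "adjacency xs $$ (i, j) = mat n n (\<lambda>(i,j). if i = j then 2 else 0) $$ (i, j)"
      proof (cases "i = j")
        case True
        have "dim_Ext1 (xs ! i) (xs ! i) = 2" using dimExt_same br[OF ij(1)] by blast
        then show ?thesis using ij True by (simp add: adjacency_def n_def)
      next
        case False
        have h0: "dim_Hom (xs ! i) (xs ! j) = 0"
          using bs False ij unfolding brick_set_def n_def by auto
        have "act1 (xs ! i) $$ (0,0) \<noteq> act1 (xs ! j) $$ (0,0) \<or> act2 (xs ! i) $$ (0,0) \<noteq> act2 (xs ! j) $$ (0,0)"
          using dimHom_same[of "xs ! i" "xs ! j"] br[OF ij(1)] br[OF ij(2)] h0 by auto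
        then have "dim_Ext1 (xs ! i) (xs ! j) = 0"
          using dimExt_diff br[OF ij(1)] br[OF ij(2)] by blast
        then show ?thesis using ij False by (simp add: adjacency_def n_def)
      qed
    qed (auto simp: adjacency_def n_def)
    then show ?thesis using spec2[OF n] by simp
  qed
  define M0 :: "'k rep" where "M0 = (1, 1\<^sub>m 1, 1\<^sub>m 1)"
  have M0: "is_rep M0" "rep_dim M0 = 1"
    unfolding M0_def is_rep_def rep_dim_def act1_def act2_def by auto
  have "dim_Hom M0 M0 = 1" using dimHom_same[OF M0 M0] by simp
  then have "brick_set [M0]" unfolding brick_set_def is_brick_def using M0 by auto
  then have ne: "{xs :: 'k rep list. brick_set xs} \<noteq> {}" by blast
  have "fpdim_REP TYPE('k) = (SUP xs \<in> {xs :: 'k rep list. brick_set xs}. ereal 2)"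
    unfolding fpdim_REP_def by (rule SUP_cong) (auto simp: all)
  also have "\<dots> = 2" using ne by simp
  finally show ?thesis .
qed


end
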